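(* Let $L\ge6$ be an even integer, let $\xi=(\xi_k)$ be i.i.d. $N(0,1)$, and let $X=(X_k,k\in\mathbb Z)$ be a sequence of real random variables with finite $L$-th moments such that for every integer $n\ge0$ and every integer $h\ge 4L^{n+1}$, $$E[S(X,h)/\sqrt h]^L\le h^{-L/2}\sum_{j=1}^h\binom hj\left(\tfrac12\right)^hE(S(\xi,j))^L-h^{-L/2}\cdot L!\cdot2^{-L}\cdot(L^n)^{L/2}\sum_{j=2L^{n+1}}^h\binom hj\left(\tfrac12\right)^h.$$ Then for every integer $h\ge 4L$, $$E[S(X,h)/\sqrt h]^L\le h^{-L/2}\sum_{j=1}^h\binom hj\left(\tfrac12\right)^hE(S(\xi,j))^L-2^{-(5L+2)/2}\cdot L!\cdot L^{-L}.$$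
   Context: $S(X,h):=X_1+\dots+X_h$, and similarly for $\xi$. *)

theory Defs
  imports "HOL-Probability.Probability"
begin

definition S :: "(int \<Rightarrow> 'a \<Rightarrow> real) \<Rightarrow> nat \<Rightarrow> 'a \<Rightarrow> real" where
  "S X h = (\<lambda>\<omega>. \<Sum>k=1..h. X (int k) \<omega>)"

end

theory Submission
  imports Defs
begin

lemma binom_half:
  fixes h m :: nat assumes "2*m \<le> h"
  shows "2^h \<le> 2 * (\<Sum>j=m..h. h choose j)"
proof -
  have A: "(\<Sum>j<m. h choose j) = (\<Sum>i\<in>(\<lambda>j. h-j)`{..<m}. h choose i)"
  proof (subst sum.reindex)
    show "inj_on (\<lambda>j. h-j) {..<m}" by (rule inj_onI) (use assms in auto)
    show "(\<Sum>j<m. h choose j) = sum ((choose) h \<circ> (\<lambda>j. h - j)) {..<m}"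
      by (rule sum.cong) (use assms in \<open>auto intro: binomial_symmetric\<close>)
  qed
  also have "\<dots> \<le> (\<Sum>j=m..h. h choose j)"
    by (rule sum_mono2) (use assms in auto)
  finally have B: "(\<Sum>j<m. h choose j) \<le> (\<Sum>j=m..h. h choose j)" .
  have "{..h} = {..<m} \<union> {m..h}" using assms by auto
  hence "(2::nat)^h = (\<Sum>j<m. h choose j) + (\<Sum>j=m..h. h choose j)"
    by (simp add: choose_row_sum[symmetric] sum.union_disjoint[symmetric] ivl_disj_int)
  thus ?thesis using B by linarith
qed

lemma exn:
  fixes L h :: nat assumes "L \<ge> 2" "h \<ge> 4*L"
  shows "\<exists>n. 4*L^(n+1) \<le> h \<and> h < 4*L^(n+2)"
proof -
  have "h < 2^h" by (rule less_exp)
  also have "\<dots> \<le> L^h" using assms by (simp add: power_mono)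
  also have "\<dots> \<le> 4*L^(h+1)" using assms by simp
  finally have ex: "\<exists>n. \<not> 4*L^(n+1) \<le> h" by (intro exI[of _ h]) simp
  define k where "k = (LEAST n. \<not> 4*L^(n+1) \<le> h)"
  have k1: "\<not> 4*L^(k+1) \<le> h" unfolding k_def by (rule LeastI_ex[OF ex])
  have "k \<noteq> 0" using k1 assms by (cases k) auto
  then obtain n where kn: "k = Suc n" by (cases k) auto
  have "4*L^(n+1) \<le> h" using not_less_Least[of n "\<lambda>n. \<not> 4*L^(n+1) \<le> h"] kn k_def by auto
  thus ?thesis using k1 kn by (intro exI[of _ n]) auto
qed

lemma key:
  fixes L h n :: nat assumes L: "L \<ge> 6" and h1: "4*L^(n+1) \<le> h" and h2: "h < 4*L^(n+2)"
  shows "2 powr (- (5 * real L + 2) / 2) * fact L * real L powr (- real L)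
     \<le> real h powr (- real L / 2) * fact L * 2 powr (- real L) * (real (L ^ n)) powr (real L / 2)
           * (\<Sum>j=2 * L ^ (n + 1)..h. real (h choose j) * (1/2) ^ h)"
proof -
  define a where "a = real L"
  have a0: "a > 0" using L by (simp add: a_def)
  have "2 * (2 * L^(n+1)) \<le> h" using h1 by simp
  from binom_half[OF this] have "real (2^h) \<le> 2 * real (\<Sum>j=2 * L ^ (n + 1)..h. h choose j)"
    by (simp only: of_nat_le_iff[symmetric])
  hence "1/2 \<le> (1/2)^h * real (\<Sum>j=2 * L ^ (n + 1)..h. h choose j)"
    by (simp add: field_simps)
  also have "\<dots> = (\<Sum>j=2 * L ^ (n + 1)..h. real (h choose j) * (1/2) ^ h)"
    by (simp add: sum_distrib_left mult.commute)
  finally have sig: "1/2 \<le> (\<Sum>j=2 * L ^ (n + 1)..h. real (h choose j) * (1/2) ^ h)" .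
  have "0 < L^(n+1)" using L by simp
  hence hpos: "0 < h" using h1 by linarith
  have hp: "(4 * a^(n+2)) powr (- real L / 2) \<le> real h powr (- real L / 2)"
  proof (rule powr_mono2')
    show "real h \<le> 4 * a^(n+2)" using h2 unfolding a_def
      by (metis less_imp_le of_nat_le_iff of_nat_mult of_nat_numeral of_nat_power)
    show "0 < real h" using hpos by simp
    show "- real L / 2 \<le> 0" by simp
  qed
  have e1: "(4 * a^(n+2)) powr (- real L / 2) * (real (L ^ n)) powr (real L / 2) = 2 powr (- real L) * a powr (- real L)"
  proof -
    have "(4 * a^(n+2)) powr (- real L / 2) = 4 powr (- real L / 2) * (a powr (real (n+2))) powr (- real L / 2)"
    proof -
      have "a^(n+2) = a powr real (n+2)" using a0 by (simp only: powr_realpow)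
      thus ?thesis using a0 by (simp only: powr_mult[of 4 "a powr real (n+2)"])
    qed
    also have "\<dots> = 2 powr (- real L) * a powr (- real (n+2) * real L / 2)"
    proof -
      have f: "(4::real) powr (- real L / 2) = 2 powr (- real L)"
      proof -
        have "((2::real) powr 2) powr (- real L / 2) = 2 powr (2 * (- real L / 2))" by (rule powr_powr)
        moreover have "(2::real) powr 2 = 4" by simp
        ultimately show ?thesis by simp
      qed
      show ?thesis unfolding f powr_powr by (rule arg_cong[where f="\<lambda>x. _ * (a powr x)"]) (simp add: field_simps)
    qed
    finally have A: "(4 * a^(n+2)) powr (- real L / 2) = 2 powr (- real L) * a powr (- real (n+2) * real L / 2)" .
    have B: "(real (L ^ n)) powr (real L / 2) = a powr (real n * real L / 2)"
      using a0 by (simp add: a_def powr_powr powr_realpow[symmetric])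
    have "a powr (- real (n+2) * real L / 2) * a powr (real n * real L / 2) = a powr (- real L)"
      by (simp add: powr_add[symmetric] field_simps)
    thus ?thesis using A B by (simp add: mult.assoc)
  qed
  have c: "2 powr (- (5 * real L + 2) / 2) \<le> 2 powr (- real L) * 2 powr (- real L) * (1/2)"
  proof -
    have "2 powr (- real L) * 2 powr (- real L) * (1/2) = 2 powr (- 2 * real L - 1)"
      by (simp add: powr_add[symmetric] powr_minus_divide powr_diff)
    moreover have "2 powr (- (5 * real L + 2) / 2) \<le> 2 powr (- 2 * real L - 1)"
      by (rule powr_mono) auto
    ultimately show ?thesis by simp
  qed
  have fp: "fact L > (0::real)" by simp
  have "2 powr (- (5 * real L + 2) / 2) * fact L * a powr (- real L)
      \<le> (2 powr (- real L) * 2 powr (- real L) * (1/2)) * fact L * a powr (- real L)"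
    using c fp by (intro mult_right_mono) auto
  also have "\<dots> = ((4 * a^(n+2)) powr (- real L / 2) * (real (L ^ n)) powr (real L / 2)) * fact L * 2 powr (- real L) * (1/2)"
    unfolding e1 by (simp only: mult_ac)
  also have "\<dots> \<le> (real h powr (- real L / 2) * (real (L ^ n)) powr (real L / 2)) * fact L * 2 powr (- real L) * (\<Sum>j=2 * L ^ (n + 1)..h. real (h choose j) * (1/2) ^ h)"
    using hp sig fp by (intro mult_mono) auto
  finally show ?thesis by (simp add: a_def mult_ac)
qed

theorem lemma5p2:
  fixes M :: "'a measure" and N :: "'b measure"
    and X :: "int \<Rightarrow> 'a \<Rightarrow> real" and \<xi> :: "int \<Rightarrow> 'b \<Rightarrow> real" and L :: nat
  assumes "L \<ge> 6" and "even L"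
    and "prob_space N"
    and "prob_space.indep_vars N (\<lambda>_. borel) \<xi> UNIV"
    and "\<And>k. distributed N lborel (\<xi> k) std_normal_density"
    and "prob_space M"
    and "\<And>k. X k \<in> borel_measurable M"
    and "\<And>k. integrable M (\<lambda>\<omega>. (X k \<omega>) ^ L)"
    and hyp: "\<And>n h. h \<ge> 4 * L ^ (n + 1) \<Longrightarrow>
      prob_space.expectation M (\<lambda>\<omega>. (S X h \<omega> / sqrt (real h)) ^ L)
      \<le> real h powr (- real L / 2) *
           (\<Sum>j=1..h. real (h choose j) * (1/2) ^ h *
               prob_space.expectation N (\<lambda>\<omega>. (S \<xi> j \<omega>) ^ L))
        - real h powr (- real L / 2) * fact L * 2 powr (- real L) * (real (L ^ n)) powr (real L / 2)
           * (\<Sum>j=2 * L ^ (n + 1)..h. real (h choose j) * (1/2) ^ h)"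
  shows "\<And>h. h \<ge> 4 * L \<Longrightarrow>
      prob_space.expectation M (\<lambda>\<omega>. (S X h \<omega> / sqrt (real h)) ^ L)
      \<le> real h powr (- real L / 2) *
           (\<Sum>j=1..h. real (h choose j) * (1/2) ^ h *
               prob_space.expectation N (\<lambda>\<omega>. (S \<xi> j \<omega>) ^ L))
        - 2 powr (- (5 * real L + 2) / 2) * fact L * real L powr (- real L)"
proof -
  fix h :: nat assume h: "h \<ge> 4 * L"
  obtain n where n1: "4*L^(n+1) \<le> h" and n2: "h < 4*L^(n+2)" using exn[of L h] h assms(1) by auto
  show "prob_space.expectation M (\<lambda>\<omega>. (S X h \<omega> / sqrt (real h)) ^ L)
      \<le> real h powr (- real L / 2) *
           (\<Sum>j=1..h. real (h choose j) * (1/2) ^ h *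
               prob_space.expectation N (\<lambda>\<omega>. (S \<xi> j \<omega>) ^ L))
        - 2 powr (- (5 * real L + 2) / 2) * fact L * real L powr (- real L)"
    using hyp[OF n1] key[OF assms(1) n1 n2] by linarith
qed

end
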